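(* Let $\mathcal{U}=\{u_1,\ldots,u_M\}\subset\mathbb{R}\setminus\{0\}$, $u_{\min}=\min_m|u_m|$, $u_{\max}=\max_m|u_m|$, $\sigma^2>0$, $N>k\ge1$, and $\sigma_{N/k}^2=\sigma^2/\log(N/k)$. Let $h(\omega)=\sum_{m=1}^M\exp\big(\frac{|u_m|u_{\max}}{\sigma_{N/k}^2}-\frac{u_m^2}{2\sigma_{N/k}^2}+\frac{u_m\omega}{\sigma_{N/k}^2}\big)$. For $\omega\sim\mathcal{N}(0,\sigma_{N/k}^2)$, $$\mathbb{P}(h(\omega)\le1)\le(N/k)^{-C_{1,2}},\qquad C_{1,2}=\frac{(u_{\max}-u_{\min}/2)^2}{2\sigma^2}.$$ *)

theory Defs
  imports "HOL-Probability.Probability"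
begin

definition sigma_sq_Nk :: "real \<Rightarrow> nat \<Rightarrow> nat \<Rightarrow> real" where
  "sigma_sq_Nk \<sigma>2 N k = \<sigma>2 / ln (real N / real k)"

definition h_fun :: "real set \<Rightarrow> real \<Rightarrow> nat \<Rightarrow> nat \<Rightarrow> real \<Rightarrow> real" where
  "h_fun U \<sigma>2 N k \<omega> =
     (let s = sigma_sq_Nk \<sigma>2 N k; umax = Max (abs ` U) in
      \<Sum>u\<in>U. exp (\<bar>u\<bar> * umax / s - u^2 / (2 * s) + u * \<omega> / s))"

end

theory Submission
  imports Defs
begin

lemma nd_ptwise:
  assumes "0 \<le> t" "t \<le> x * d" "d = 1 \<or> d = -1"
  shows "normal_density 0 s x \<le> exp (- (t^2) / (2 * s^2)) * normal_density (d * t) s x"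
proof -
  have "- (x^2) \<le> - (t^2) - (x - d*t)^2"
  proof -
    have "(x - d*t)^2 = x^2 - 2*t*(x*d) + t^2" using assms(3) by (auto simp: power2_eq_square algebra_simps)
    moreover have "t * t \<le> t * (x*d)" using assms by (intro mult_left_mono) auto
    ultimately show ?thesis by (simp add: power2_eq_square)
  qed
  hence "- (x^2) / (2 * s^2) \<le> (- (t^2) - (x - d*t)^2) / (2 * s^2)"
    by (intro divide_right_mono) auto
  hence "exp (- (x^2) / (2 * s^2)) \<le> exp (- (t^2) / (2 * s^2)) * exp (- ((x - d*t)^2) / (2 * s^2))"
    by (simp add: exp_add[symmetric] add_divide_distrib diff_divide_distrib)
  thus ?thesis unfolding normal_density_def
    by (simp add: mult.left_commute divide_right_mono)
qed

lemma tail: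
  assumes "0 \<le> t" "d = 1 \<or> d = -1" "0 < s"
  shows "measure (density lborel (normal_density 0 s)) {x. t \<le> x * d} \<le> exp (- (t^2) / (2 * s^2))"
proof -
  let ?c = "exp (- (t^2) / (2 * s^2))"
  have "emeasure (density lborel (normal_density 0 s)) {x. t \<le> x * d}
      = (\<integral>\<^sup>+ x. ennreal (normal_density 0 s x) * indicator {x. t \<le> x * d} x \<partial>lborel)"
    by (subst emeasure_density) auto
  also have "\<dots> \<le> (\<integral>\<^sup>+ x. ennreal ?c * ennreal (normal_density (d*t) s x) \<partial>lborel)"
  proof (intro nn_integral_mono)
    fix x
    show "ennreal (normal_density 0 s x) * indicator {x. t \<le> x * d} x
          \<le> ennreal ?c * ennreal (normal_density (d*t) s x)"
    proof (cases "t \<le> x * d")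
      case True
      then show ?thesis using nd_ptwise[OF assms(1) True assms(2), of s]
        by (simp add: ennreal_mult[symmetric])
    qed simp
  qed
  also have "\<dots> = ennreal ?c * (\<integral>\<^sup>+ x. ennreal (normal_density (d*t) s x) \<partial>lborel)"
    by (rule nn_integral_cmult) auto
  also have "(\<integral>\<^sup>+ x. ennreal (normal_density (d*t) s x) \<partial>lborel) = 1"
    using prob_space.emeasure_space_1[OF prob_space_normal_density[OF assms(3), of "d*t"]]
    by (simp add: emeasure_density)
  finally have "emeasure (density lborel (normal_density 0 s)) {x. t \<le> x * d} \<le> ennreal ?c" by simp
  thus ?thesis by (simp add: measure_def enn2real_leI)
qed

theorem lemma6:
  fixes U :: "real set" and \<sigma>2 :: real and N k :: nat
  assumes "finite U" and "U \<noteq> {}" and "0 \<notin> U"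
    and "\<sigma>2 > 0" and "1 \<le> k" and "k < N"
  shows "measure (density lborel (normal_density 0 (sqrt (sigma_sq_Nk \<sigma>2 N k))))
            {\<omega>. h_fun U \<sigma>2 N k \<omega> \<le> 1}
         \<le> (real N / real k) powr
              (- ((Max (abs ` U) - Min (abs ` U) / 2)^2 / (2 * \<sigma>2)))"
proof -
  define umax where "umax = Max (abs ` U)"
  define umin where "umin = Min (abs ` U)"
  define s where "s = sigma_sq_Nk \<sigma>2 N k"
  define L where "L = ln (real N / real k)"
  define t where "t = umax - umin / 2"
  have L: "L > 0" unfolding L_def using assms by simp
  have s: "s > 0" "s = \<sigma>2 / L" unfolding s_def sigma_sq_Nk_def L_def[symmetric] using L assms by auto
  have "umin \<in> abs ` U" unfolding umin_def using assms by (intro Min_in) auto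
  then obtain u where u: "u \<in> U" "\<bar>u\<bar> = umin" by auto
  have u0: "u \<noteq> 0" using u assms by auto
  have "umin \<le> umax" unfolding umin_def umax_def using assms by (simp add: Min_le_iff Max_ge_iff)
  hence t0: "0 \<le> t" using u u0 unfolding t_def by auto
  define d where "d = (if u > 0 then -1 else (1::real))"
  have d: "d = 1 \<or> d = -1" unfolding d_def by auto
  have sub: "{\<omega>. h_fun U \<sigma>2 N k \<omega> \<le> 1} \<subseteq> {x. t \<le> x * d}"
  proof
    fix \<omega> assume "\<omega> \<in> {\<omega>. h_fun U \<sigma>2 N k \<omega> \<le> 1}"
    hence h: "(\<Sum>v\<in>U. exp (\<bar>v\<bar> * umax / s - v^2 / (2 * s) + v * \<omega> / s)) \<le> 1"
      unfolding h_fun_def Let_def s_def umax_def by simp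
    have "exp (\<bar>u\<bar> * umax / s - u^2 / (2 * s) + u * \<omega> / s) \<le> (\<Sum>v\<in>U. exp (\<bar>v\<bar> * umax / s - v^2 / (2 * s) + v * \<omega> / s))"
      by (rule member_le_sum) (use u assms in auto)
    with h have "exp (\<bar>u\<bar> * umax / s - u^2 / (2 * s) + u * \<omega> / s) \<le> 1" by linarith
    hence "\<bar>u\<bar> * umax / s - u^2 / (2 * s) + u * \<omega> / s \<le> 0" by simp
    moreover have "\<bar>u\<bar> * umax / s - u^2 / (2 * s) + u * \<omega> / s = (\<bar>u\<bar> * umax - u^2 / 2 + u * \<omega>) / s"
      by (simp add: add_divide_distrib diff_divide_distrib)
    ultimately have "(\<bar>u\<bar> * umax - u^2 / 2 + u * \<omega>) / s \<le> 0" by simp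
    hence e: "\<bar>u\<bar> * umax - u^2 / 2 + u * \<omega> \<le> 0" using s(1) by (simp add: divide_le_0_iff)
    show "\<omega> \<in> {x. t \<le> x * d}"
    proof (cases "u > 0")
      case True
      have "u * (umax - u/2 + \<omega>) \<le> 0" using e True by (simp add: algebra_simps power2_eq_square)
      hence "umax - u/2 + \<omega> \<le> 0" using True by (simp add: mult_le_0_iff)
      thus ?thesis using True u unfolding t_def d_def by auto
    next
      case False
      hence F: "u < 0" using u0 by auto
      have "(-u) * (umax + u/2 - \<omega>) \<le> 0" using e F by (simp add: algebra_simps power2_eq_square)
      hence "umax + u/2 - \<omega> \<le> 0" using F by (smt (verit) mult_le_0_iff)
      thus ?thesis using F u unfolding t_def d_def by auto
    qed
  qed
  interpret prob_space "density lborel (normal_density 0 (sqrt s))" by (rule prob_space_normal_density) (use s in simp)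
  have "measure (density lborel (normal_density 0 (sqrt s))) {\<omega>. h_fun U \<sigma>2 N k \<omega> \<le> 1}
      \<le> measure (density lborel (normal_density 0 (sqrt s))) {x. t \<le> x * d}"
    by (rule finite_measure_mono[OF sub]) simp
  also have "\<dots> \<le> exp (- (t^2) / (2 * (sqrt s)^2))" by (rule tail[OF t0 d]) (use s in simp)
  also have "exp (- (t^2) / (2 * (sqrt s)^2)) = (real N / real k) powr (- (t^2 / (2 * \<sigma>2)))"
  proof -
    have "(sqrt s)^2 = s" using s by simp
    moreover have "- (t^2) / (2 * s) = ln (real N / real k) * (- (t^2 / (2 * \<sigma>2)))"
    proof -
      have "\<sigma>2 = L * s" using s L by simp
      thus ?thesis unfolding L_def[symmetric] using s(1) L by (simp add: field_simps)
    qed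
    ultimately show ?thesis using assms unfolding powr_def by simp
  qed
  finally show ?thesis unfolding s_def t_def umax_def umin_def .
qed

end
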